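(* Let $D$ be any continuous distribution on $\mathbb{R}^d$ whose probability density function depends only on the distance from the origin. Then there is a noisy distribution $\tilde D$ over $\mathbb{R}^d\times\{-1,1\}$ with marginal $D$ that satisfies the Massart noise condition $|\Pr(y=1\mid\vec x)-\Pr(y=-1\mid\vec x)|\ge\beta$ for all $\vec x$, for some parameter $\beta>0$, with Bayes optimal classifier a homogeneous halfspace $\vec w^*$, such that the \textsf{Average} algorithm returns a classifier $\vec w$ with excess error $\mathrm{err}_{\tilde D}(\vec w)-\mathrm{err}_{\tilde D}(\vec w^* )=\Omega\!\left(\frac{\beta(1-\beta)}{1+\beta}\right)$.
   Context: The \textsf{Average} algorithm, given labeled samples $(\vec x^1,y^1),\dots,(\vec x^m,y^m)$, returns the vector $\frac1m\sum_{i=1}^m y^i\vec x^i$, interpreted as the halfspace $\mathrm{sign}(\vec w\cdot\vec x)$; in the statement, $\vec w$ is the expected vector returned, $\mathbb{E}_{(\vec x,y)\sim\tilde D}[y\vec x]$. $\mathrm{err}_{\tilde D}(\vec w)=\Pr_{(\vec x,y)\sim\tilde D}[\mathrm{sign}(\vec w\cdot\vec x)\ne y]$. *)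

theory Defs
  imports "HOL-Probability.Probability"
begin

text \<open>Euclidean space R^d, with points represented as functions nat => real
  (coordinates 0..d-1, extensional), equipped with Lebesgue measure (product of lborel).\<close>
definition euc :: "nat \<Rightarrow> (nat \<Rightarrow> real) measure" where
  "euc d = PiM {..<d} (\<lambda>_. lborel)"

definition ip :: "nat \<Rightarrow> (nat \<Rightarrow> real) \<Rightarrow> (nat \<Rightarrow> real) \<Rightarrow> real" where
  "ip d w x = (\<Sum>i<d. w i * x i)"

definition enorm :: "nat \<Rightarrow> (nat \<Rightarrow> real) \<Rightarrow> real" where
  "enorm d x = sqrt (\<Sum>i<d. (x i)^2)"

definition radial_continuous_dist :: "nat \<Rightarrow> (nat \<Rightarrow> real) measure \<Rightarrow> bool" where
  "radial_continuous_dist d D \<longleftrightarrow> prob_space D \<and>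
     (\<exists>f g. f \<in> borel_measurable (euc d) \<and>
            (\<forall>x\<in>space (euc d). f x = g (enorm d x)) \<and>
            D = density (euc d) f)"

definition noisy_dist :: "(nat \<Rightarrow> real) measure \<Rightarrow> ((nat \<Rightarrow> real) \<Rightarrow> real)
     \<Rightarrow> ((nat \<Rightarrow> real) \<times> real) measure" where
  "noisy_dist D \<eta> = density (D \<Otimes>\<^sub>M count_space {-1, 1::real})
      (\<lambda>(x, y). ennreal (if y = 1 then \<eta> x else 1 - \<eta> x))"

definition err :: "((nat \<Rightarrow> real) \<times> real) measure \<Rightarrow> ((nat \<Rightarrow> real) \<Rightarrow> real) \<Rightarrow> real" where
  "err N h = measure N {p \<in> space N. h (fst p) \<noteq> snd p}"

definition hs_err :: "nat \<Rightarrow> ((nat \<Rightarrow> real) \<times> real) measure \<Rightarrow> (nat \<Rightarrow> real) \<Rightarrow> real" where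
  "hs_err d N w = err N (\<lambda>x. sgn (ip d w x))"

text \<open>Expected output of the Average algorithm: E[y x].\<close>
definition average_vec :: "nat \<Rightarrow> ((nat \<Rightarrow> real) \<times> real) measure \<Rightarrow> (nat \<Rightarrow> real)" where
  "average_vec d N = (\<lambda>i. if i < d then (\<integral>p. snd p * fst p i \<partial>N) else 0)"

end

theory Submission
  imports Defs
begin

definition P2 :: "(real \<times> real) measure" where "P2 = lborel \<Otimes>\<^sub>M lborel"

definition pres2 :: "(real \<times> real \<Rightarrow> real \<times> real) \<Rightarrow> bool" where
  "pres2 T \<longleftrightarrow> T \<in> measurable P2 P2 \<and> distr P2 P2 T = P2"

lemma space_P2[simp]: "space P2 = UNIV" by (simp add: P2_def space_pair_measure)

lemma pres2_comp: "pres2 T \<Longrightarrow> pres2 S \<Longrightarrow> pres2 (S \<circ> T)"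
  unfolding pres2_def
  by (metis distr_distr measurable_comp)

lemma pres2I:
  assumes T: "T \<in> measurable P2 P2"
  and eq: "\<And>A. A \<in> sets P2 \<Longrightarrow> (\<integral>\<^sup>+ p. indicator A (T p) \<partial>P2) = emeasure P2 A"
  shows "pres2 T"
  unfolding pres2_def
proof (intro conjI T measure_eqI)
  fix A assume A: "A \<in> sets (distr P2 P2 T)"
  hence A': "A \<in> sets P2" by simp
  have "emeasure (distr P2 P2 T) A = emeasure P2 (T -` A \<inter> space P2)"
    using A' T by (simp add: emeasure_distr)
  also have "\<dots> = (\<integral>\<^sup>+ p. indicator (T -` A \<inter> space P2) p \<partial>P2)"
    using measurable_sets[OF T A'] by (intro nn_integral_indicator[symmetric]) simp
  also have "\<dots> = (\<integral>\<^sup>+ p. indicator A (T p) \<partial>P2)"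
    by (intro nn_integral_cong) (auto simp: indicator_def)
  finally show "emeasure (distr P2 P2 T) A = emeasure P2 A" using eq[OF A'] by simp
qed simp

lemma ind_meas: "A \<in> sets P2 \<Longrightarrow> (\<lambda>p. indicator A p :: ennreal) \<in> borel_measurable (lborel \<Otimes>\<^sub>M lborel)"
  by (simp add: P2_def)

lemma pres2_shear_x: "pres2 (\<lambda>(a,b). (a + c * b, b))"
proof (rule pres2I)
  show "(\<lambda>(a,b). (a + c * b, b)) \<in> measurable P2 P2" unfolding P2_def by measurable
  fix A assume A: "A \<in> sets P2"
  have m: "(\<lambda>p. indicator A p :: ennreal) \<in> borel_measurable (lborel \<Otimes>\<^sub>M lborel)"
    using A by (simp add: P2_def)
  have m2: "(\<lambda>p. indicator A (case p of (a, b) \<Rightarrow> (a + c * b, b)) :: ennreal) \<in> borel_measurable (lborel \<Otimes>\<^sub>M lborel)"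
    using A by (simp add: P2_def)
  have "(\<integral>\<^sup>+ p. indicator A ((\<lambda>(a,b). (a + c * b, b)) p) \<partial>P2)
      = (\<integral>\<^sup>+ b. (\<integral>\<^sup>+ a. indicator A (a + c * b, b) \<partial>lborel) \<partial>lborel)"
    unfolding P2_def using lborel_pair.nn_integral_snd[OF m2] by simp
  also have "\<dots> = (\<integral>\<^sup>+ b. (\<integral>\<^sup>+ a. indicator A (a, b) \<partial>lborel) \<partial>lborel)"
  proof (rule nn_integral_cong)
    fix b :: real
    have mb: "(\<lambda>a. indicator A (a, b) :: ennreal) \<in> borel_measurable borel"
      using m by (simp add: measurable_Pair1')
    show "(\<integral>\<^sup>+ a. indicator A (a + c * b, b) \<partial>lborel) = (\<integral>\<^sup>+ a. indicator A (a, b) \<partial>lborel)"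
      using nn_integral_real_affine[OF mb, of 1 "c*b"] by (simp add: add.commute)
  qed
  also have "\<dots> = emeasure P2 A"
    unfolding P2_def using lborel_pair.nn_integral_snd[OF m] A
    by (metis P2_def nn_integral_indicator)
  finally show "(\<integral>\<^sup>+ p. indicator A ((\<lambda>(a,b). (a + c * b, b)) p) \<partial>P2) = emeasure P2 A" .
qed

lemma pres2_shear_y: "pres2 (\<lambda>(a,b). (a, b + c * a))"
proof (rule pres2I)
  show "(\<lambda>(a,b). (a, b + c * a)) \<in> measurable P2 P2" unfolding P2_def by measurable
  fix A assume A: "A \<in> sets P2"
  have m: "(\<lambda>p. indicator A p :: ennreal) \<in> borel_measurable (lborel \<Otimes>\<^sub>M lborel)"
    using A by (simp add: P2_def)
  have m2: "(\<lambda>p. indicator A (case p of (a, b) \<Rightarrow> (a, b + c * a)) :: ennreal) \<in> borel_measurable (lborel \<Otimes>\<^sub>M lborel)"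
    using A by (simp add: P2_def)
  have "(\<integral>\<^sup>+ p. indicator A ((\<lambda>(a,b). (a, b + c * a)) p) \<partial>P2)
      = (\<integral>\<^sup>+ a. (\<integral>\<^sup>+ b. indicator A (a, b + c * a) \<partial>lborel) \<partial>lborel)"
    unfolding P2_def using lborel.nn_integral_fst[OF m2] by simp
  also have "\<dots> = (\<integral>\<^sup>+ a. (\<integral>\<^sup>+ b. indicator A (a, b) \<partial>lborel) \<partial>lborel)"
  proof (rule nn_integral_cong)
    fix a :: real
    have mb: "(\<lambda>b. indicator A (a, b) :: ennreal) \<in> borel_measurable borel"
      using m by (simp add: measurable_Pair2')
    show "(\<integral>\<^sup>+ b. indicator A (a, b + c * a) \<partial>lborel) = (\<integral>\<^sup>+ b. indicator A (a, b) \<partial>lborel)"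
      using nn_integral_real_affine[OF mb, of 1 "c*a"] by (simp add: add.commute)
  qed
  also have "\<dots> = emeasure P2 A"
    unfolding P2_def using lborel.nn_integral_fst[OF m] A
    by (metis P2_def nn_integral_indicator)
  finally show "(\<integral>\<^sup>+ p. indicator A ((\<lambda>(a,b). (a, b + c * a)) p) \<partial>P2) = emeasure P2 A" .
qed

lemma pres2_neg1: "pres2 (\<lambda>(a,b). (- a, b))"
proof (rule pres2I)
  show "(\<lambda>(a,b). (- a, b)) \<in> measurable P2 P2" unfolding P2_def by measurable
  fix A assume A: "A \<in> sets P2"
  have m: "(\<lambda>p. indicator A p :: ennreal) \<in> borel_measurable (lborel \<Otimes>\<^sub>M lborel)"
    using A by (simp add: P2_def)
  have m2: "(\<lambda>p. indicator A (case p of (a, b) \<Rightarrow> (- a, b)) :: ennreal) \<in> borel_measurable (lborel \<Otimes>\<^sub>M lborel)"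
    using A by (simp add: P2_def)
  have "(\<integral>\<^sup>+ p. indicator A ((\<lambda>(a,b). (- a, b)) p) \<partial>P2)
      = (\<integral>\<^sup>+ b. (\<integral>\<^sup>+ a. indicator A (- a, b) \<partial>lborel) \<partial>lborel)"
    unfolding P2_def using lborel_pair.nn_integral_snd[OF m2] by simp
  also have "\<dots> = (\<integral>\<^sup>+ b. (\<integral>\<^sup>+ a. indicator A (a, b) \<partial>lborel) \<partial>lborel)"
  proof (rule nn_integral_cong)
    fix b :: real
    have mb: "(\<lambda>a. indicator A (a, b) :: ennreal) \<in> borel_measurable borel"
      using m by (simp add: measurable_Pair1')
    show "(\<integral>\<^sup>+ a. indicator A (- a, b) \<partial>lborel) = (\<integral>\<^sup>+ a. indicator A (a, b) \<partial>lborel)"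
      using nn_integral_real_affine[OF mb, of "-1" 0] by simp
  qed
  also have "\<dots> = emeasure P2 A"
    unfolding P2_def using lborel_pair.nn_integral_snd[OF m] A
    by (metis P2_def nn_integral_indicator)
  finally show "(\<integral>\<^sup>+ p. indicator A ((\<lambda>(a,b). (- a, b)) p) \<partial>P2) = emeasure P2 A" .
qed

lemma pres2_swap: "pres2 (\<lambda>(a,b). (b, a))"
  unfolding pres2_def P2_def
proof
  show "(\<lambda>(a, b). (b, a)) \<in> lborel \<Otimes>\<^sub>M lborel \<rightarrow>\<^sub>M lborel \<Otimes>\<^sub>M (lborel::real measure)"
    by (rule measurable_pair_swap')
  show "distr (lborel \<Otimes>\<^sub>M lborel) (lborel \<Otimes>\<^sub>M lborel) (\<lambda>(a, b). (b, a)) = lborel \<Otimes>\<^sub>M (lborel::real measure)"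
    by (rule lborel_pair.distr_pair_swap[symmetric])
qed

lemma pres2_neg2: "pres2 (\<lambda>(a,b). (a, - b))"
proof -
  have eq: "(\<lambda>(a,b). (a, - b)) = (\<lambda>(a,b). (b, a)) \<circ> (\<lambda>(a,b). (- a, b)) \<circ> (\<lambda>(a,b::real). (b, a))"
    by auto
  show ?thesis unfolding eq by (intro pres2_comp pres2_swap pres2_neg1)
qed

lemma pres2_rot:
  assumes cs: "c^2 + s^2 = 1"
  shows "pres2 (\<lambda>(a,b). (c * a - s * b, s * a + c * b))"
proof (cases "s = 0")
  case True
  hence "c = 1 \<or> c = -1" using cs by (auto simp: power2_eq_1_iff)
  thus ?thesis
  proof
    assume "c = 1"
    hence "(\<lambda>(a,b). (c * a - s * b, s * a + c * b)) = (\<lambda>(a,b). (a + 0 * b, b))" using True by auto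
    thus ?thesis using pres2_shear_x[of 0] by simp
  next
    assume "c = -1"
    hence "(\<lambda>(a,b). (c * a - s * b, s * a + c * b)) = (\<lambda>(a,b). (a, - b)) \<circ> (\<lambda>(a,b). (- a, b))" using True by auto
    thus ?thesis by (simp only:) (intro pres2_comp pres2_neg1 pres2_neg2)
  qed
next
  case False
  define t where "t = (c - 1) / s"
  have "(\<lambda>(a,b). (c * a - s * b, s * a + c * b)) =
     (\<lambda>(a,b). (a + t * b, b)) \<circ> (\<lambda>(a,b). (a, b + s * a)) \<circ> (\<lambda>(a,b). (a + t * b, b))"
  proof (rule ext, clarsimp)
    fix a b :: real
    have e1: "t * s = c - 1" using False by (simp add: t_def)
    have e2: "2 * t + t * t * s = - s"
    proof -
      have "2 * t + t * t * s = 2 * t + t * (t * s)" by (simp add: mult.assoc)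
      also have "\<dots> = t * (c + 1)" unfolding e1 by (simp add: algebra_simps)
      also have "\<dots> = (c*c - 1) / s" by (simp add: t_def algebra_simps)
      also have "\<dots> = - s" using cs False by (simp add: power2_eq_square field_simps)
      finally show ?thesis .
    qed
    show "c * a - s * b = a + t * b + t * (b + s * (a + t * b)) \<and> s * a + c * b = b + s * (a + t * b)"
    proof
      have "a + t * b + t * (b + s * (a + t * b)) = a * (1 + t * s) + b * (2 * t + t * t * s)"
        by (simp add: algebra_simps)
      thus "c * a - s * b = a + t * b + t * (b + s * (a + t * b))" using e1 e2 by simp
      have "b + s * (a + t * b) = s * a + b * (1 + t * s)" by (simp add: algebra_simps)
      thus "s * a + c * b = b + s * (a + t * b)" using e1 by simp
    qed
  qed
  thus ?thesis by (simp only:) (intro pres2_comp pres2_shear_x pres2_shear_y)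
qed

lemma euc_sf: "product_sigma_finite (\<lambda>_::nat. lborel::real measure)"
  by standard

lemma meas_upd2:
  fixes R :: "nat set"
  assumes z: "z \<in> space (PiM R (\<lambda>_. lborel))" and j: "j \<notin> R" and k: "k \<notin> insert j R"
  shows "(\<lambda>p. z(j := fst p, k := snd p)) \<in> measurable P2 (PiM (insert k (insert j R)) (\<lambda>_. lborel::real measure))"
proof -
  have m1: "(\<lambda>p. (z, fst p)) \<in> measurable P2 (PiM R (\<lambda>_. lborel) \<Otimes>\<^sub>M lborel)"
    using z unfolding P2_def by measurable
  have m2: "(\<lambda>p. (z(j := fst p))) \<in> measurable P2 (PiM (insert j R) (\<lambda>_. lborel::real measure))"
    using measurable_comp[OF m1 measurable_add_dim] by (simp add: comp_def)
  have m3: "(\<lambda>p. (z(j := fst p), snd p)) \<in> measurable P2 (PiM (insert j R) (\<lambda>_. lborel) \<Otimes>\<^sub>M lborel)"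
    using m2 unfolding P2_def by measurable
  show ?thesis
    using measurable_comp[OF m3 measurable_add_dim] by (simp add: comp_def)
qed

lemma decomp:
  fixes R :: "nat set"
  assumes R: "finite R" and j: "j \<notin> R" and k: "k \<notin> insert j R"
  and f: "f \<in> borel_measurable (PiM (insert k (insert j R)) (\<lambda>_. lborel::real measure))"
  shows "integral\<^sup>N (PiM (insert k (insert j R)) (\<lambda>_. lborel)) f =
     (\<integral>\<^sup>+ z. (\<integral>\<^sup>+ p. f (z(j := fst p, k := snd p)) \<partial>P2) \<partial>PiM R (\<lambda>_. lborel))"
proof -
  interpret product_sigma_finite "\<lambda>_::nat. lborel::real measure" by standard
  have G: "(\<lambda>x. \<integral>\<^sup>+ b. f (x(k := b)) \<partial>lborel) \<in> borel_measurable (PiM (insert j R) (\<lambda>_. lborel))"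
    using f by measurable
  have "integral\<^sup>N (PiM (insert k (insert j R)) (\<lambda>_. lborel)) f =
     (\<integral>\<^sup>+ x. (\<integral>\<^sup>+ b. f (x(k := b)) \<partial>lborel) \<partial>PiM (insert j R) (\<lambda>_. lborel))"
    using product_nn_integral_insert[of "insert j R" k f] R k f by simp
  also have "\<dots> = (\<integral>\<^sup>+ z. (\<integral>\<^sup>+ a. (\<integral>\<^sup>+ b. f (z(j := a, k := b)) \<partial>lborel) \<partial>lborel) \<partial>PiM R (\<lambda>_. lborel))"
    using product_nn_integral_insert[OF R j G] by simp
  also have "\<dots> = (\<integral>\<^sup>+ z. (\<integral>\<^sup>+ p. f (z(j := fst p, k := snd p)) \<partial>P2) \<partial>PiM R (\<lambda>_. lborel))"
  proof (rule nn_integral_cong)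
    fix z assume z: "z \<in> space (PiM R (\<lambda>_. lborel::real measure))"
    have "(\<lambda>p. f (z(j := fst p, k := snd p))) \<in> borel_measurable P2"
      using measurable_comp[OF meas_upd2[OF z j k] f] by (simp add: comp_def)
    hence "(\<lambda>p. f (z(j := fst p, k := snd p))) \<in> borel_measurable (lborel \<Otimes>\<^sub>M lborel)"
      by (simp add: P2_def)
    from lborel.nn_integral_fst[OF this]
    show "(\<integral>\<^sup>+ a. (\<integral>\<^sup>+ b. f (z(j := a, k := b)) \<partial>lborel) \<partial>lborel) = (\<integral>\<^sup>+ p. f (z(j := fst p, k := snd p)) \<partial>P2)"
      by (simp add: P2_def)
  qed
  finally show ?thesis .
qed

definition phi :: "nat \<Rightarrow> nat \<Rightarrow> (real \<times> real \<Rightarrow> real \<times> real) \<Rightarrow> (nat \<Rightarrow> real) \<Rightarrow> (nat \<Rightarrow> real)" where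
  "phi j k T x = x(j := fst (T (x j, x k)), k := snd (T (x j, x k)))"

lemma space_euc: "space (euc d) = PiE {..<d} (\<lambda>_. UNIV)"
  by (simp add: euc_def space_PiM)

lemma pair_jk_meas: "(\<lambda>x. (x j, x k)) \<in> measurable (euc d) P2" if "j < d" "k < d"
  using that unfolding euc_def P2_def
  by (intro measurable_Pair measurable_component_singleton) auto

lemma phi_meas:
  assumes "j < d" "k < d" "T \<in> measurable P2 P2"
  shows "phi j k T \<in> measurable (euc d) (euc d)"
proof -
  have TT: "(\<lambda>x. T (x j, x k)) \<in> measurable (euc d) P2"
    using measurable_comp[OF pair_jk_meas[OF assms(1,2)] assms(3)] by (simp add: comp_def)
  have f: "(\<lambda>x. fst (T (x j, x k))) \<in> borel_measurable (euc d)"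
    using measurable_comp[OF TT[unfolded P2_def] measurable_fst] by (simp add: comp_def measurable_lborel2)
  have s: "(\<lambda>x. snd (T (x j, x k))) \<in> borel_measurable (euc d)"
    using measurable_comp[OF TT[unfolded P2_def] measurable_snd] by (simp add: comp_def measurable_lborel2)
  have "(\<lambda>x i. phi j k T x i) \<in> measurable (euc d) (PiM {..<d} (\<lambda>_. lborel))"
  proof (rule measurable_PiM_single')
    fix i assume i: "i \<in> {..<d}"
    have "(\<lambda>x. phi j k T x i) = (\<lambda>x. if i = k then snd (T (x j, x k)) else if i = j then fst (T (x j, x k)) else x i)"
      by (auto simp: phi_def)
    moreover have "(\<lambda>x. if i = k then snd (T (x j, x k)) else if i = j then fst (T (x j, x k)) else x i) \<in> borel_measurable (euc d)"
      using f s i unfolding euc_def by measurable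
    ultimately show "(\<lambda>x. phi j k T x i) \<in> euc d \<rightarrow>\<^sub>M lborel"
      by (simp add: measurable_lborel2)
  next
    show "(\<lambda>x i. phi j k T x i) \<in> space (euc d) \<rightarrow> (\<Pi>\<^sub>E i\<in>{..<d}. space lborel)"
      using assms(1,2) by (auto simp: euc_def space_PiM phi_def PiE_def extensional_def)
  qed
  thus ?thesis by (simp add: euc_def)
qed

lemma phi_upd: "j \<noteq> k \<Longrightarrow> phi j k T (z(j := a, k := b)) = z(j := fst (T (a, b)), k := snd (T (a, b)))"
  by (simp add: phi_def fun_upd_twist)

lemma phi_inv:
  assumes T: "pres2 T" and jk: "j < d" "k < d" "j \<noteq> k"
  and f: "f \<in> borel_measurable (euc d)"
  shows "(\<integral>\<^sup>+ x. f (phi j k T x) \<partial>euc d) = integral\<^sup>N (euc d) f"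
proof -
  define R where "R = {..<d} - {j, k}"
  have R: "finite R" "j \<notin> R" "k \<notin> insert j R" using jk by (auto simp: R_def)
  have dR: "{..<d} = insert k (insert j R)" using jk by (auto simp: R_def)
  have f': "f \<in> borel_measurable (PiM (insert k (insert j R)) (\<lambda>_. lborel))" using f by (simp add: euc_def dR)
  have Tm: "T \<in> measurable P2 P2" and Td: "distr P2 P2 T = P2" using T by (auto simp: pres2_def)
  have fphi: "(\<lambda>x. f (phi j k T x)) \<in> borel_measurable (euc d)"
    using measurable_comp[OF phi_meas[OF jk(1,2) Tm] f] by (simp add: comp_def)
  have "(\<integral>\<^sup>+ x. f (phi j k T x) \<partial>euc d) =
     (\<integral>\<^sup>+ z. (\<integral>\<^sup>+ p. f (phi j k T (z(j := fst p, k := snd p))) \<partial>P2) \<partial>PiM R (\<lambda>_. lborel))"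
    using decomp[OF R, of "\<lambda>x. f (phi j k T x)"] fphi unfolding euc_def dR by simp
  also have "\<dots> = (\<integral>\<^sup>+ z. (\<integral>\<^sup>+ p. f (z(j := fst p, k := snd p)) \<partial>P2) \<partial>PiM R (\<lambda>_. lborel))"
  proof (rule nn_integral_cong)
    fix z assume z: "z \<in> space (PiM R (\<lambda>_. lborel::real measure))"
    have Fm: "(\<lambda>p. f (z(j := fst p, k := snd p))) \<in> borel_measurable P2"
      using measurable_comp[OF meas_upd2[OF z R(2,3)] f'] by (simp add: comp_def)
    have "(\<integral>\<^sup>+ p. f (phi j k T (z(j := fst p, k := snd p))) \<partial>P2) =
        (\<integral>\<^sup>+ p. f (z(j := fst (T p), k := snd (T p))) \<partial>P2)"
      using phi_upd[OF jk(3)] by simp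
    also have "\<dots> = (\<integral>\<^sup>+ p. f (z(j := fst p, k := snd p)) \<partial>distr P2 P2 T)"
      using nn_integral_distr[OF Tm] Fm by simp
    finally show "(\<integral>\<^sup>+ p. f (phi j k T (z(j := fst p, k := snd p))) \<partial>P2) =
        (\<integral>\<^sup>+ p. f (z(j := fst p, k := snd p)) \<partial>P2)" using Td by simp
  qed
  also have "\<dots> = integral\<^sup>N (euc d) f"
    using decomp[OF R, of f] f unfolding euc_def dR by simp
  finally show ?thesis .
qed

lemma null_euc:
  assumes i: "i < d"
  shows "{x \<in> space (euc d). x i = 0} \<in> null_sets (euc d)"
proof -
  interpret product_sigma_finite "\<lambda>_::nat. lborel::real measure" by standard
  define R where "R = {..<d} - {i}"
  have R: "finite R" "i \<notin> R" by (auto simp: R_def)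
  have dR: "{..<d} = insert i R" using i by (auto simp: R_def)
  define Z where "Z = {x \<in> space (euc d). x i = 0}"
  have cm: "(\<lambda>x. x i) \<in> borel_measurable (euc d)"
    unfolding euc_def using i measurable_component_singleton[of i "{..<d}" "\<lambda>_. lborel::real measure"]
    by (simp add: measurable_lborel2)
  have "Z = (\<lambda>x. x i) -` {0} \<inter> space (euc d)" by (auto simp: Z_def)
  hence Zs: "Z \<in> sets (euc d)" using measurable_sets[OF cm] by simp
  have Zs': "Z \<in> sets (PiM (insert i R) (\<lambda>_. lborel))" using Zs by (simp add: euc_def dR)
  have "emeasure (euc d) Z = (\<integral>\<^sup>+ x. indicator Z x \<partial>PiM (insert i R) (\<lambda>_. lborel))"
    using Zs by (simp add: euc_def dR)
  also have "\<dots> = (\<integral>\<^sup>+ z. (\<integral>\<^sup>+ y. indicator Z (z(i := y)) \<partial>lborel) \<partial>PiM R (\<lambda>_. lborel))"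
    using product_nn_integral_insert[OF R borel_measurable_indicator[OF Zs']] by simp
  also have "\<dots> = (\<integral>\<^sup>+ z. (\<integral>\<^sup>+ y. indicator {0::real} y \<partial>lborel) \<partial>PiM R (\<lambda>_. lborel::real measure))"
  proof (rule nn_integral_cong)
    fix z assume z: "z \<in> space (PiM R (\<lambda>_. lborel::real measure))"
    have "\<And>y. z(i := y) \<in> space (euc d)"
      using z dR by (auto simp: euc_def space_PiM PiE_def extensional_def)
    hence "\<And>y. indicator Z (z(i := y)) = (indicator {0::real} y :: ennreal)"
      by (auto simp: Z_def indicator_def)
    thus "(\<integral>\<^sup>+ y. indicator Z (z(i := y)) \<partial>lborel) = (\<integral>\<^sup>+ y. indicator {0::real} y \<partial>lborel)"
      by simp
  qed
  also have "\<dots> = 0" by simp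
  finally show ?thesis using Zs by (simp add: Z_def null_sets_def)
qed

locale setting =
  fixes d :: nat and D :: "(nat \<Rightarrow> real) measure" and f0 :: "(nat \<Rightarrow> real) \<Rightarrow> ennreal"
    and g :: "real \<Rightarrow> ennreal"
  assumes d2: "2 \<le> d" and ps: "prob_space D" and f0m: "f0 \<in> borel_measurable (euc d)"
    and f0g: "\<forall>x\<in>space (euc d). f0 x = g (enorm d x)" and Dd: "D = density (euc d) f0"
begin

lemma sets_D[simp, measurable_cong]: "sets D = sets (euc d)" by (simp add: Dd)
lemma space_D[simp]: "space D = space (euc d)" by (simp add: Dd)

lemma meas_D: "borel_measurable D = borel_measurable (euc d)"
  by (rule measurable_cong_sets) auto

lemma null_D: "i < d \<Longrightarrow> {x \<in> space (euc d). x i = 0} \<in> null_sets D"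
  unfolding Dd using null_euc[of i d] f0m
  by (subst null_sets_density_iff) (auto dest: AE_not_in)

lemma AE_nz: "i < d \<Longrightarrow> AE x in D. x i \<noteq> 0"
proof -
  assume i: "i < d"
  have "AE x in D. x \<notin> {x \<in> space (euc d). x i = 0}" by (rule AE_not_in[OF null_D[OF i]])
  then show ?thesis by (rule AE_mp) (rule AE_I2, auto)
qed

lemma enorm_phi:
  assumes jk: "j < d" "k < d" "j \<noteq> k" and nT: "\<And>p. (fst (T p))^2 + (snd (T p))^2 = (fst p)^2 + (snd p)^2"
  shows "enorm d (phi j k T x) = enorm d x"
proof -
  define R where "R = {..<d} - {j, k}"
  have dR: "{..<d} = insert k (insert j R)" using jk by (auto simp: R_def)
  have R: "finite R" "j \<notin> R" "k \<notin> insert j R" using jk by (auto simp: R_def)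
  have e: "\<And>y. (\<Sum>i<d. (y i)^2) = (y k)^2 + (y j)^2 + (\<Sum>i\<in>R. (y i)^2)"
    unfolding dR using R by (simp add: add.assoc)
  have "(\<Sum>i\<in>R. (phi j k T x i)^2) = (\<Sum>i\<in>R. (x i)^2)"
    using R by (intro sum.cong) (auto simp: phi_def)
  moreover have "(phi j k T x k)^2 + (phi j k T x j)^2 = (x k)^2 + (x j)^2"
    using nT[of "(x j, x k)"] jk by (simp add: phi_def)
  ultimately show ?thesis unfolding enorm_def e by simp
qed

lemma distr_phi:
  assumes T: "pres2 T" and jk: "j < d" "k < d" "j \<noteq> k"
    and nT: "\<And>p. (fst (T p))^2 + (snd (T p))^2 = (fst p)^2 + (snd p)^2"
  shows "distr D D (phi j k T) = D"
proof (rule measure_eqI)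
  have Tm: "T \<in> measurable P2 P2" using T by (simp add: pres2_def)
  have pm: "phi j k T \<in> measurable (euc d) (euc d)" by (rule phi_meas[OF jk(1,2) Tm])
  have pmD: "phi j k T \<in> measurable D D" using pm by (simp add: Dd)
  show "sets (distr D D (phi j k T)) = sets D" by simp
  fix A assume "A \<in> sets (distr D D (phi j k T))"
  hence A: "A \<in> sets (euc d)" by simp
  have sp: "\<And>x. x \<in> space (euc d) \<Longrightarrow> phi j k T x \<in> space (euc d)"
    using pm by (auto dest: measurable_space)
  have "emeasure (distr D D (phi j k T)) A = emeasure D (phi j k T -` A \<inter> space D)"
    using A pmD by (simp add: emeasure_distr)
  also have "\<dots> = (\<integral>\<^sup>+ x. f0 x * indicator (phi j k T -` A \<inter> space (euc d)) x \<partial>euc d)"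
    unfolding Dd using measurable_sets[OF pm A] f0m by (simp add: emeasure_density)
  also have "\<dots> = (\<integral>\<^sup>+ x. (\<lambda>y. f0 y * indicator A y) (phi j k T x) \<partial>euc d)"
    using sp f0g enorm_phi[OF jk nT]
    by (intro nn_integral_cong) (auto simp: indicator_def)
  also have "\<dots> = (\<integral>\<^sup>+ y. f0 y * indicator A y \<partial>euc d)"
  proof (rule phi_inv[OF T jk])
    note [measurable] = A f0m
    show "(\<lambda>y. f0 y * indicator A y) \<in> borel_measurable (euc d)" by measurable
  qed
  also have "\<dots> = emeasure D A" unfolding Dd using A f0m by (simp add: emeasure_density)
  finally show "emeasure (distr D D (phi j k T)) A = emeasure D A" .
qed

lemma integral_phi:
  fixes F :: "(nat \<Rightarrow> real) \<Rightarrow> real"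
  assumes T: "pres2 T" and jk: "j < d" "k < d" "j \<noteq> k"
    and nT: "\<And>p. (fst (T p))^2 + (snd (T p))^2 = (fst p)^2 + (snd p)^2"
    and F: "F \<in> borel_measurable (euc d)"
  shows "(\<integral>x. F (phi j k T x) \<partial>D) = (\<integral>x. F x \<partial>D)"
proof -
  have Tm: "T \<in> measurable P2 P2" using T by (simp add: pres2_def)
  have pmD: "phi j k T \<in> measurable D D" using phi_meas[OF jk(1,2) Tm] by (simp add: Dd)
  have "(\<integral>x. F x \<partial>D) = (\<integral>x. F x \<partial>distr D D (phi j k T))" using distr_phi[OF T jk nT] by simp
  also have "\<dots> = (\<integral>x. F (phi j k T x) \<partial>D)"
    using F by (intro integral_distr[OF pmD]) (simp add: meas_D)
  finally show ?thesis by simp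
qed

lemma measure_phi:
  assumes T: "pres2 T" and jk: "j < d" "k < d" "j \<noteq> k"
    and nT: "\<And>p. (fst (T p))^2 + (snd (T p))^2 = (fst p)^2 + (snd p)^2"
    and A: "A \<in> sets (euc d)"
  shows "measure D (phi j k T -` A \<inter> space (euc d)) = measure D A"
proof -
  have Tm: "T \<in> measurable P2 P2" using T by (simp add: pres2_def)
  have pmD: "phi j k T \<in> measurable D D" using phi_meas[OF jk(1,2) Tm] by (simp add: Dd)
  have "measure D A = measure (distr D D (phi j k T)) A" using distr_phi[OF T jk nT] by simp
  also have "\<dots> = measure D (phi j k T -` A \<inter> space (euc d))"
    using A pmD by (simp add: measure_distr)
  finally show ?thesis by simp
qed

end

context setting begin

lemma errN:
  assumes em: "\<eta> \<in> borel_measurable (euc d)" and e01: "\<And>x. 0 \<le> \<eta> x \<and> \<eta> x \<le> 1"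
    and hm: "h \<in> borel_measurable (euc d)"
  shows "err (noisy_dist D \<eta>) h =
     (\<integral>x. (if h x \<noteq> 1 then \<eta> x else 0) + (if h x \<noteq> -1 then 1 - \<eta> x else 0) \<partial>D)"
proof -
  interpret Dp: prob_space D by (rule ps)
  let ?C = "count_space {-1, 1::real}"
  interpret C: sigma_finite_measure ?C by (rule sigma_finite_measure_count_space_finite) simp
  interpret DC: pair_sigma_finite D ?C
    by (intro pair_sigma_finite.intro Dp.sigma_finite_measure_axioms C.sigma_finite_measure_axioms)
  define e where "e x = (if h x \<noteq> 1 then \<eta> x else 0) + (if h x \<noteq> -1 then 1 - \<eta> x else 0)" for x
  define \<psi> where "\<psi> p = ennreal (if snd p = 1 then \<eta> (fst p) else 1 - \<eta> (fst p))" for p :: "(nat \<Rightarrow> real) \<times> real"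
  have N: "noisy_dist D \<eta> = density (D \<Otimes>\<^sub>M ?C) \<psi>"
    unfolding noisy_dist_def \<psi>_def by (simp add: case_prod_beta')
  have em': "\<eta> \<in> borel_measurable D" and hm': "h \<in> borel_measurable D" using em hm by (auto simp: meas_D)
  have sndm: "(\<lambda>p. snd p) \<in> measurable (D \<Otimes>\<^sub>M ?C) (count_space UNIV)"
    by (rule measurable_compose[OF measurable_snd]) simp
  have sndb: "(\<lambda>p. snd p) \<in> borel_measurable (D \<Otimes>\<^sub>M ?C)"
    by (rule measurable_compose[OF measurable_snd]) simp
  have ef: "(\<lambda>p. \<eta> (fst p)) \<in> borel_measurable (D \<Otimes>\<^sub>M ?C)"
    by (rule measurable_compose[OF measurable_fst em'])
  have hf: "(\<lambda>p. h (fst p)) \<in> borel_measurable (D \<Otimes>\<^sub>M ?C)"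
    by (rule measurable_compose[OF measurable_fst hm'])
  note [measurable] = sndb ef hf
  have \<psi>m: "\<psi> \<in> borel_measurable (D \<Otimes>\<^sub>M ?C)"
  proof (rule measurable_cong[THEN iffD2])
    have h2: "\<And>a::real. (2 - 2 * a) / 2 = 1 - a" by simp
    show "\<And>p. p \<in> space (D \<Otimes>\<^sub>M ?C) \<Longrightarrow> \<psi> p = ennreal ((1 + snd p) / 2 * \<eta> (fst p) + (1 - snd p) / 2 * (1 - \<eta> (fst p)))"
      by (auto simp: \<psi>_def space_pair_measure h2)
    show "(\<lambda>p. ennreal ((1 + snd p) / 2 * \<eta> (fst p) + (1 - snd p) / 2 * (1 - \<eta> (fst p)))) \<in> borel_measurable (D \<Otimes>\<^sub>M ?C)"
      by measurable
  qed
  define S where "S = {p \<in> space (D \<Otimes>\<^sub>M ?C). h (fst p) \<noteq> snd p}"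
  have Sm: "S \<in> sets (D \<Otimes>\<^sub>M ?C)"
    unfolding S_def by measurable
  have "emeasure (noisy_dist D \<eta>) S = (\<integral>\<^sup>+ p. \<psi> p * indicator S p \<partial>(D \<Otimes>\<^sub>M ?C))"
    unfolding N using \<psi>m Sm by (simp add: emeasure_density)
  also have "\<dots> = (\<integral>\<^sup>+ x. (\<integral>\<^sup>+ y. \<psi> (x, y) * indicator S (x, y) \<partial>?C) \<partial>D)"
    using \<psi>m Sm by (intro C.nn_integral_fst[symmetric] borel_measurable_times_ennreal borel_measurable_indicator)
  also have "\<dots> = (\<integral>\<^sup>+ x. ennreal (e x) \<partial>D)"
  proof (rule nn_integral_cong)
    fix x assume x: "x \<in> space D"
    have "(\<integral>\<^sup>+ y. \<psi> (x, y) * indicator S (x, y) \<partial>?C) = (\<Sum>y\<in>{-1, 1::real}. \<psi> (x, y) * indicator S (x, y))"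
      by (simp add: nn_integral_count_space_finite)
    also have "\<dots> = \<psi> (x, -1) * indicator S (x, -1) + \<psi> (x, 1) * indicator S (x, 1)"
    proof -
      have two: "\<And>F :: real \<Rightarrow> ennreal. (\<Sum>y\<in>{-1, 1::real}. F y) = F (-1) + F 1" by simp
      show ?thesis by (rule two)
    qed
    also have "\<dots> = ennreal (e x)"
    proof -
      have i1: "indicator S (x, -1) = (if h x \<noteq> -1 then 1 else 0 :: ennreal)"
        using x by (simp add: S_def space_pair_measure indicator_def)
      have i2: "indicator S (x, 1) = (if h x \<noteq> 1 then 1 else 0 :: ennreal)"
        using x by (simp add: S_def space_pair_measure indicator_def)
      have p1: "\<psi> (x, -1) = ennreal (1 - \<eta> x)" and p2: "\<psi> (x, 1) = ennreal (\<eta> x)"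
        by (simp_all add: \<psi>_def)
      have sum: "ennreal (1 - \<eta> x) + ennreal (\<eta> x) = ennreal (\<eta> x + (1 - \<eta> x))"
        using e01[of x] by (subst ennreal_plus) auto
      show ?thesis
        unfolding i1 i2 p1 p2 e_def
        by (cases "h x = 1"; cases "h x = -1") (simp_all add: sum)
    qed
    finally show "(\<integral>\<^sup>+ y. \<psi> (x, y) * indicator S (x, y) \<partial>?C) = ennreal (e x)" .
  qed
  finally have eq: "emeasure (noisy_dist D \<eta>) S = (\<integral>\<^sup>+ x. ennreal (e x) \<partial>D)" .
  have sp: "space (noisy_dist D \<eta>) = space (D \<Otimes>\<^sub>M ?C)" unfolding N by (rule space_density)
  have "err (noisy_dist D \<eta>) h = measure (noisy_dist D \<eta>) S"
    unfolding err_def S_def sp by (rule refl)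
  also have "\<dots> = enn2real (\<integral>\<^sup>+ x. ennreal (e x) \<partial>D)"
    unfolding measure_def eq by (rule refl)
  also have "\<dots> = (\<integral>x. e x \<partial>D)"
  proof (rule integral_eq_nn_integral[symmetric])
    note [measurable] = em' hm'
    show "e \<in> borel_measurable D" unfolding e_def by measurable
    show "AE x in D. 0 \<le> e x" using e01 by (intro AE_I2) (simp add: e_def)
  qed
  finally show ?thesis unfolding e_def .
qed

lemma avgN:
  assumes em: "\<eta> \<in> borel_measurable (euc d)" and e01: "\<And>x. 0 \<le> \<eta> x \<and> \<eta> x \<le> 1"
    and i: "i < d" and int: "integrable D (\<lambda>x. x i)"
  shows "average_vec d (noisy_dist D \<eta>) i = (\<integral>x. (2 * \<eta> x - 1) * x i \<partial>D)"
proof -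
  interpret Dp: prob_space D by (rule ps)
  let ?C = "count_space {-1, 1::real}"
  interpret C: sigma_finite_measure ?C by (rule sigma_finite_measure_count_space_finite) simp
  interpret DC: pair_sigma_finite D ?C
    by (intro pair_sigma_finite.intro Dp.sigma_finite_measure_axioms C.sigma_finite_measure_axioms)
  define G where "G p = (if snd p = 1 then \<eta> (fst p) else 1 - \<eta> (fst p))" for p :: "(nat \<Rightarrow> real) \<times> real"
  have N: "noisy_dist D \<eta> = density (D \<Otimes>\<^sub>M ?C) (\<lambda>p. ennreal (G p))"
    unfolding noisy_dist_def G_def by (simp add: case_prod_beta')
  have em': "\<eta> \<in> borel_measurable D" using em by (auto simp: meas_D)
  have sndm: "(\<lambda>p. snd p) \<in> measurable (D \<Otimes>\<^sub>M ?C) (count_space UNIV)"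
    by (rule measurable_compose[OF measurable_snd]) simp
  have sndb: "(\<lambda>p. snd p) \<in> borel_measurable (D \<Otimes>\<^sub>M ?C)"
    by (rule measurable_compose[OF measurable_snd]) simp
  have ef: "(\<lambda>p. \<eta> (fst p)) \<in> borel_measurable (D \<Otimes>\<^sub>M ?C)"
    by (rule measurable_compose[OF measurable_fst em'])
  note [measurable] = sndb ef
  have Gm: "G \<in> borel_measurable (D \<Otimes>\<^sub>M ?C)"
  proof (rule measurable_cong[THEN iffD2])
    have h2: "\<And>a::real. (2 - 2 * a) / 2 = 1 - a" by simp
    show "\<And>p. p \<in> space (D \<Otimes>\<^sub>M ?C) \<Longrightarrow> G p = ((1 + snd p) / 2 * \<eta> (fst p) + (1 - snd p) / 2 * (1 - \<eta> (fst p)))"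
      by (auto simp: G_def space_pair_measure h2)
    show "(\<lambda>p. ((1 + snd p) / 2 * \<eta> (fst p) + (1 - snd p) / 2 * (1 - \<eta> (fst p)))) \<in> borel_measurable (D \<Otimes>\<^sub>M ?C)"
      by measurable
  qed
  have xi: "(\<lambda>x. x i) \<in> borel_measurable D" using int by auto
  have fm: "(\<lambda>p. snd p * fst p i) \<in> borel_measurable (D \<Otimes>\<^sub>M ?C)"
    using xi sndb by measurable
  have Fm: "(\<lambda>p. G p * (snd p * fst p i)) \<in> borel_measurable (D \<Otimes>\<^sub>M ?C)"
    using Gm fm by measurable
  have "average_vec d (noisy_dist D \<eta>) i = (\<integral>p. snd p * fst p i \<partial>noisy_dist D \<eta>)"
    using i by (simp add: average_vec_def)
  also have "\<dots> = (\<integral>p. G p * (snd p * fst p i) \<partial>(D \<Otimes>\<^sub>M ?C))"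
    unfolding N using fm Gm e01 by (subst integral_density) (auto simp: G_def)
  also have "\<dots> = (\<integral>x. (\<integral>y. G (x, y) * (y * x i) \<partial>?C) \<partial>D)"
  proof -
    have int2: "integrable (D \<Otimes>\<^sub>M ?C) (\<lambda>p. G p * (snd p * fst p i))"
    proof (rule DC.Fubini_integrable[OF Fm])
      have "(\<lambda>x. \<integral>y. norm (G (x, y) * (y * x i)) \<partial>?C) = (\<lambda>x. \<bar>x i\<bar>)"
      proof
        fix x
        have "(\<integral>y. norm (G (x, y) * (y * x i)) \<partial>?C) = (\<Sum>y\<in>{-1, 1::real}. norm (G (x, y) * (y * x i)))"
          by (simp add: lebesgue_integral_count_space_finite)
        also have "\<dots> = \<bar>x i\<bar>"
          using e01[of x] by (simp add: G_def abs_mult algebra_simps)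
        finally show "(\<integral>y. norm (G (x, y) * (y * x i)) \<partial>?C) = \<bar>x i\<bar>" .
      qed
      thus "integrable D (\<lambda>x. \<integral>y. norm (G (x, y) * (snd (x, y) * fst (x, y) i)) \<partial>?C)"
        using int by simp
      show "AE x in D. integrable ?C (\<lambda>y. G (x, y) * (snd (x, y) * fst (x, y) i))"
        by (simp add: integrable_count_space)
    qed
    show ?thesis using DC.integral_fst'[OF int2] by simp
  qed
  also have "\<dots> = (\<integral>x. (2 * \<eta> x - 1) * x i \<partial>D)"
  proof (rule Bochner_Integration.integral_cong[OF refl])
    fix x
    have "(\<integral>y. G (x, y) * (y * x i) \<partial>?C) = (\<Sum>y\<in>{-1, 1::real}. G (x, y) * (y * x i))"
      by (simp add: lebesgue_integral_count_space_finite)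
    also have "\<dots> = (2 * \<eta> x - 1) * x i" by (simp add: G_def algebra_simps)
    finally show "(\<integral>y. G (x, y) * (y * x i) \<partial>?C) = (2 * \<eta> x - 1) * x i" .
  qed
  finally show ?thesis .
qed

end

definition sfun :: "real \<Rightarrow> (nat \<Rightarrow> real) \<Rightarrow> real" where
  "sfun \<beta> x = (if 0 < x 0 * x 1 then 1 else \<beta>)"
definition eta :: "real \<Rightarrow> (nat \<Rightarrow> real) \<Rightarrow> real" where
  "eta \<beta> x = (if 0 < x 0 then (1 + sfun \<beta> x) / 2 else (1 - sfun \<beta> x) / 2)"
definition sg :: "(nat \<Rightarrow> real) \<Rightarrow> real" where "sg x = (if 0 < x 0 then 1 else -1)"
definition qf :: "(nat \<Rightarrow> real) \<Rightarrow> real" where "qf x = (if 0 < x 0 * x 1 then 1 else 0)"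
definition qf' :: "(nat \<Rightarrow> real) \<Rightarrow> real" where "qf' x = (if x 0 * x 1 < 0 then 1 else 0)"

lemma sfun_upd: "i \<noteq> 0 \<Longrightarrow> i \<noteq> 1 \<Longrightarrow> sfun \<beta> (x(i := v)) = sfun \<beta> x"
  by (simp add: sfun_def)

lemma comp_m: "i < d \<Longrightarrow> (\<lambda>x. x i) \<in> borel_measurable (euc d)"
  unfolding euc_def using measurable_component_singleton[of i "{..<d}" "\<lambda>_. lborel::real measure"]
  by (simp add: measurable_lborel2)

lemma nT_neg2: fixes p :: "real \<times> real" shows "(fst ((\<lambda>(a,b). (a, - b)) p))^2 + (snd ((\<lambda>(a,b). (a, - b)) p))^2 = (fst p)^2 + (snd p)^2"
  by (cases p) (simp add: power2_eq_square)
lemma nT_swap: fixes p :: "real \<times> real" shows "(fst ((\<lambda>(a,b). (b, a)) p))^2 + (snd ((\<lambda>(a,b). (b, a)) p))^2 = (fst p)^2 + (snd p)^2"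
  by (cases p) (simp add: power2_eq_square)
lemma nT_neg1: fixes p :: "real \<times> real" shows "(fst ((\<lambda>(a,b). (- a, b)) p))^2 + (snd ((\<lambda>(a,b). (- a, b)) p))^2 = (fst p)^2 + (snd p)^2"
  by (cases p) (simp add: power2_eq_square)

lemma phi_neg2_app: "phi j k (\<lambda>(a,b). (a, - b)) x = x(k := - x k)"
  by (simp add: phi_def)
lemma phi_swap_app: "phi j k (\<lambda>(a,b). (b, a)) x = x(j := x k, k := x j)"
  by (simp add: phi_def)
lemma phi_neg1_app: "j \<noteq> k \<Longrightarrow> phi j k (\<lambda>(a,b). (- a, b)) x = x(j := - x j)"
  by (simp add: phi_def fun_upd_twist)

locale setting2 = setting +
  fixes \<beta> :: real
  assumes integ: "\<forall>i<d. integrable D (\<lambda>x. x i)" and b0: "0 < \<beta>" and b1: "\<beta> \<le> 1"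
begin

lemma d0: "0 < d" and d1: "1 < d" using d2 by auto

lemma int_abs: "i < d \<Longrightarrow> integrable D (\<lambda>x. \<bar>x i\<bar>)"
  using integ by (auto intro: integrable_abs)

lemma cm[measurable]: "(\<lambda>x. x 0) \<in> borel_measurable (euc d)" "(\<lambda>x. x 1) \<in> borel_measurable (euc d)"
   "(\<lambda>x. x (Suc 0)) \<in> borel_measurable (euc d)"
  using comp_m d0 d1 by auto

lemma int_bound: assumes "i < d" "F \<in> borel_measurable (euc d)" "\<And>x. \<bar>F x\<bar> \<le> \<bar>x i\<bar>"
  shows "integrable D F"
proof (rule Bochner_Integration.integrable_bound)
  show "integrable D (\<lambda>x. x i)" using assms integ by auto
  show "F \<in> borel_measurable D" using assms by (simp add: meas_D)
  show "AE x in D. norm (F x) \<le> norm (x i)" using assms by (intro AE_I2) auto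
qed

lemma eta_m: "eta \<beta> \<in> borel_measurable (euc d)"
  unfolding eta_def sfun_def by measurable

lemma eta01: "0 \<le> eta \<beta> x \<and> eta \<beta> x \<le> 1"
  using b0 b1 by (auto simp: eta_def sfun_def)

lemma two_eta: "2 * eta \<beta> x - 1 = sg x * sfun \<beta> x"
  by (simp add: eta_def sg_def field_simps)

lemma I_sg: "(\<integral>x. sg x * x 1 \<partial>D) = 0"
proof -
  have "(\<integral>x. sg x * x 1 \<partial>D) = (\<integral>x. (\<lambda>y. sg y * y 1) (phi 0 1 (\<lambda>(a,b). (a, - b)) x) \<partial>D)"
    using d1 by (intro integral_phi[symmetric] pres2_neg2 nT_neg2) (auto simp: sg_def)
  also have "\<dots> = (\<integral>x. - (sg x * x 1) \<partial>D)" by (simp add: phi_neg2_app sg_def)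
  finally show ?thesis by simp
qed

lemma I_swap: "(\<integral>x. qf x * \<bar>x 1\<bar> \<partial>D) = (\<integral>x. qf x * \<bar>x 0\<bar> \<partial>D)"
proof -
  have "(\<integral>x. qf x * \<bar>x 0\<bar> \<partial>D) = (\<integral>x. (\<lambda>y. qf y * \<bar>y 0\<bar>) (phi 0 1 (\<lambda>(a,b). (b, a)) x) \<partial>D)"
    using d1 by (intro integral_phi[symmetric] pres2_swap nT_swap) (auto simp: qf_def)
  also have "\<dots> = (\<integral>x. qf x * \<bar>x 1\<bar> \<partial>D)" by (simp add: phi_swap_app qf_def mult.commute)
  finally show ?thesis by simp
qed

lemma I_q': "(\<integral>x. qf' x * \<bar>x 0\<bar> \<partial>D) = (\<integral>x. qf x * \<bar>x 0\<bar> \<partial>D)"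
proof -
  have "(\<integral>x. qf x * \<bar>x 0\<bar> \<partial>D) = (\<integral>x. (\<lambda>y. qf y * \<bar>y 0\<bar>) (phi 0 1 (\<lambda>(a,b). (a, - b)) x) \<partial>D)"
    using d1 by (intro integral_phi[symmetric] pres2_neg2 nT_neg2) (auto simp: qf_def)
  also have "\<dots> = (\<integral>x. qf' x * \<bar>x 0\<bar> \<partial>D)" by (simp add: phi_neg2_app qf_def qf'_def)
  finally show ?thesis by simp
qed

lemma I_split: "(\<integral>x. \<bar>x 0\<bar> \<partial>D) = (\<integral>x. qf x * \<bar>x 0\<bar> \<partial>D) + (\<integral>x. qf' x * \<bar>x 0\<bar> \<partial>D)"
proof -
  have i1: "integrable D (\<lambda>x. qf x * \<bar>x 0\<bar>)"
    using d0 by (intro int_bound[of 0]) (auto simp: qf_def abs_mult)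
  have i2: "integrable D (\<lambda>x. qf' x * \<bar>x 0\<bar>)"
    using d0 by (intro int_bound[of 0]) (auto simp: qf'_def abs_mult)
  have "(\<integral>x. \<bar>x 0\<bar> \<partial>D) = (\<integral>x. qf x * \<bar>x 0\<bar> + qf' x * \<bar>x 0\<bar> \<partial>D)"
  proof (rule integral_cong_AE)
    show "(\<lambda>x. \<bar>x 0\<bar>) \<in> borel_measurable D" by (simp add: meas_D)
    show "(\<lambda>x. qf x * \<bar>x 0\<bar> + qf' x * \<bar>x 0\<bar>) \<in> borel_measurable D"
      unfolding meas_D qf_def qf'_def by measurable
    show "AE x in D. \<bar>x 0\<bar> = qf x * \<bar>x 0\<bar> + qf' x * \<bar>x 0\<bar>"
      using AE_nz[OF d1]
    proof (rule AE_mp, intro AE_I2 impI)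
      fix x :: "nat \<Rightarrow> real" assume "x 1 \<noteq> 0"
      thus "\<bar>x 0\<bar> = qf x * \<bar>x 0\<bar> + qf' x * \<bar>x 0\<bar>"
        by (cases "x 0 = 0") (auto simp: qf_def qf'_def mult_less_0_iff zero_less_mult_iff)
    qed
  qed
  also have "\<dots> = (\<integral>x. qf x * \<bar>x 0\<bar> \<partial>D) + (\<integral>x. qf' x * \<bar>x 0\<bar> \<partial>D)"
    by (rule Bochner_Integration.integral_add[OF i1 i2])
  finally show ?thesis .
qed

definition A0 where "A0 = (\<integral>x. qf x * \<bar>x 0\<bar> \<partial>D)"

lemma A0_nonneg: "0 \<le> A0"
  unfolding A0_def by (intro integral_nonneg_AE AE_I2) (simp add: qf_def)

lemma a0_val: "(\<integral>x. (2 * eta \<beta> x - 1) * x 0 \<partial>D) = (1 + \<beta>) * A0"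
proof -
  have iab: "integrable D (\<lambda>x. \<bar>x 0\<bar>)" using int_abs d0 by auto
  have iq: "integrable D (\<lambda>x. qf x * \<bar>x 0\<bar>)"
    using d0 by (intro int_bound[of 0]) (auto simp: qf_def abs_mult)
  have "(\<integral>x. (2 * eta \<beta> x - 1) * x 0 \<partial>D) = (\<integral>x. \<beta> * \<bar>x 0\<bar> + (1 - \<beta>) * (qf x * \<bar>x 0\<bar>) \<partial>D)"
    by (rule Bochner_Integration.integral_cong[OF refl])
       (auto simp: two_eta sg_def sfun_def qf_def zero_less_mult_iff algebra_simps)
  also have "\<dots> = \<beta> * (\<integral>x. \<bar>x 0\<bar> \<partial>D) + (1 - \<beta>) * A0"
    unfolding A0_def using iab iq by simp
  also have "\<dots> = (1 + \<beta>) * A0"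
    using I_split I_q' unfolding A0_def by (simp add: algebra_simps)
  finally show ?thesis .
qed

lemma a1_val: "(\<integral>x. (2 * eta \<beta> x - 1) * x 1 \<partial>D) = (1 - \<beta>) * A0"
proof -
  have isg: "integrable D (\<lambda>x. sg x * x 1)"
    using d1 by (intro int_bound[of 1]) (auto simp: sg_def meas_D)
  have iq: "integrable D (\<lambda>x. qf x * \<bar>x 1\<bar>)"
    using d1 by (intro int_bound[of 1]) (auto simp: qf_def abs_mult)
  have "(\<integral>x. (2 * eta \<beta> x - 1) * x 1 \<partial>D) = (\<integral>x. \<beta> * (sg x * x 1) + (1 - \<beta>) * (qf x * \<bar>x 1\<bar>) \<partial>D)"
    by (rule Bochner_Integration.integral_cong[OF refl])
       (auto simp: two_eta sg_def sfun_def qf_def zero_less_mult_iff algebra_simps)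
  also have "\<dots> = \<beta> * (\<integral>x. sg x * x 1 \<partial>D) + (1 - \<beta>) * (\<integral>x. qf x * \<bar>x 1\<bar> \<partial>D)"
    using isg iq by simp
  also have "\<dots> = (1 - \<beta>) * A0"
    using I_sg I_swap unfolding A0_def by simp
  finally show ?thesis .
qed

lemma ai_val: assumes "2 \<le> i" "i < d" shows "(\<integral>x. (2 * eta \<beta> x - 1) * x i \<partial>D) = 0"
proof -
  have im: "(\<lambda>x. x i) \<in> borel_measurable (euc d)" using comp_m assms by auto
  note [measurable] = im eta_m
  have mm: "(\<lambda>y. (2 * eta \<beta> y - 1) * y i) \<in> borel_measurable (euc d)" by measurable
  have "(\<integral>x. (2 * eta \<beta> x - 1) * x i \<partial>D) = (\<integral>x. (\<lambda>y. (2 * eta \<beta> y - 1) * y i) (phi 0 i (\<lambda>(a,b). (a, - b)) x) \<partial>D)"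
    using assms by (intro integral_phi[symmetric] pres2_neg2 nT_neg2 mm) auto
  also have "\<dots> = (\<integral>x. - ((2 * eta \<beta> x - 1) * x i) \<partial>D)"
  proof -
    have i0: "i \<noteq> 0" "i \<noteq> 1" using assms by auto
    have e: "\<And>x. eta \<beta> (x(i := - x i)) = eta \<beta> x"
      using i0 by (simp add: eta_def sfun_def)
    show ?thesis using i0 by (simp add: phi_neg2_app e)
  qed
  finally show ?thesis by simp
qed

end

definition rotT :: "real \<Rightarrow> real \<times> real \<Rightarrow> real \<times> real" where
  "rotT \<alpha> = (\<lambda>(a,b). (cos \<alpha> * a - (- sin \<alpha>) * b, (- sin \<alpha>) * a + cos \<alpha> * b))"

lemma pres2_rotT: "pres2 (rotT \<alpha>)"
  unfolding rotT_def by (rule pres2_rot) simp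

lemma nT_rotT: fixes p :: "real \<times> real"
  shows "(fst (rotT \<alpha> p))^2 + (snd (rotT \<alpha> p))^2 = (fst p)^2 + (snd p)^2"
proof (cases p)
  case (Pair a b)
  have cs: "cos \<alpha> * cos \<alpha> = 1 - sin \<alpha> * sin \<alpha>"
    using sin_cos_squared_add[of \<alpha>] by (simp add: power2_eq_square algebra_simps)
  show ?thesis using Pair by (simp add: rotT_def power2_eq_square algebra_simps cs)
qed

lemma phi_rot_app: "phi 0 1 (rotT \<alpha>) x 0 = x 0 * cos \<alpha> + x 1 * sin \<alpha>"
  "phi 0 1 (rotT \<alpha>) x 1 = - x 0 * sin \<alpha> + x 1 * cos \<alpha>"
  by (simp_all add: phi_def rotT_def algebra_simps)

text \<open>The geometric core: covering a quadrant by rotated wedges.\<close>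
lemma cover_point:
  fixes r u v :: real
  assumes r: "0 < r" "r \<le> 1" and u: "0 < u" and v: "0 < v"
  defines "\<theta> \<equiv> arctan r"
  defines "n \<equiv> nat \<lceil>pi / (2 * \<theta>)\<rceil>"
  shows "\<exists>j::nat. j < n \<and> - (- v * cos (real j * \<theta>) + u * sin (real j * \<theta>)) \<ge> 0 \<and>
                 v * sin (real j * \<theta>) + u * cos (real j * \<theta>) > 0 \<and>
                 - (- v * cos (real j * \<theta>) + u * sin (real j * \<theta>)) \<le> r * (v * sin (real j * \<theta>) + u * cos (real j * \<theta>))"
proof -
  have th0: "0 < \<theta>" using r by (simp add: \<theta>_def)
  have th1: "\<theta> \<le> pi / 4" using r arctan_le_iff[of r 1] by (simp add: \<theta>_def arctan_one)
  define \<phi> where "\<phi> = arctan (v / u)"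
  have ph0: "0 < \<phi>" using u v by (simp add: \<phi>_def)
  have ph1: "\<phi> < pi / 2" using arctan_ubound by (simp add: \<phi>_def)
  have cph: "0 < cos \<phi>" using ph0 ph1 by (intro cos_gt_zero_pi) auto
  have tph: "tan \<phi> = v / u" by (simp add: \<phi>_def tan_arctan)
  define \<rho> where "\<rho> = u / cos \<phi>"
  have rho: "0 < \<rho>" using u cph by (simp add: \<rho>_def)
  have uu: "u = \<rho> * cos \<phi>" using cph by (simp add: \<rho>_def)
  have vv: "v = \<rho> * sin \<phi>"
  proof -
    have "v = u * tan \<phi>" using tph u by simp
    thus ?thesis using cph by (simp add: \<rho>_def tan_def)
  qed
  define j where "j = nat \<lfloor>\<phi> / \<theta>\<rfloor>"
  have fl0: "0 \<le> \<lfloor>\<phi> / \<theta>\<rfloor>" using ph0 th0 by simp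
  have jr: "real j = of_int \<lfloor>\<phi> / \<theta>\<rfloor>" using fl0 by (simp add: j_def)
  have jle: "real j * \<theta> \<le> \<phi>"
  proof -
    have "real j \<le> \<phi> / \<theta>" using jr by linarith
    thus ?thesis using th0 by (simp add: pos_le_divide_eq)
  qed
  have jgt: "\<phi> < (real j + 1) * \<theta>"
  proof -
    have "\<phi> / \<theta> < real j + 1" using jr by linarith
    thus ?thesis using th0 by (simp add: divide_less_eq)
  qed
  have jn: "j < n"
  proof -
    have "\<phi> / \<theta> < pi / (2 * \<theta>)" using ph1 th0 by (simp add: divide_strict_right_mono field_simps)
    hence "\<lfloor>\<phi> / \<theta>\<rfloor> < \<lceil>pi / (2 * \<theta>)\<rceil>" by linarith
    thus ?thesis using fl0 th0 by (simp add: j_def n_def)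
  qed
  define \<psi> where "\<psi> = \<phi> - j * \<theta>"
  have ps0: "0 \<le> \<psi>" using jle by (simp add: \<psi>_def)
  have ps1: "\<psi> \<le> \<theta>" using jgt by (simp add: \<psi>_def algebra_simps)
  have cps: "0 < cos \<psi>" using ps0 ps1 th1 pi_gt_zero by (intro cos_gt_zero_pi) linarith+
  have sps: "0 \<le> sin \<psi>" using ps0 ps1 th1 by (intro sin_ge_zero) (auto intro: order_trans[OF _ pi_ge_zero])
  have tps: "tan \<psi> \<le> r"
  proof -
    have "tan \<psi> \<le> tan \<theta>" using ps0 ps1 th1 pi_gt_zero by (intro tan_mono_le) linarith+
    thus ?thesis by (simp add: \<theta>_def tan_arctan)
  qed
  have sr: "sin \<psi> \<le> r * cos \<psi>"
  proof -
    have "sin \<psi> = tan \<psi> * cos \<psi>" using cps by (simp add: tan_def)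
    also have "\<dots> \<le> r * cos \<psi>" using tps cps by (intro mult_right_mono) auto
    finally show ?thesis .
  qed
  have e1: "- (- v * cos (j * \<theta>) + u * sin (j * \<theta>)) = \<rho> * sin \<psi>"
    unfolding uu vv \<psi>_def by (simp add: sin_diff algebra_simps)
  have e2: "v * sin (j * \<theta>) + u * cos (j * \<theta>) = \<rho> * cos \<psi>"
    unfolding uu vv \<psi>_def by (simp add: cos_diff algebra_simps)
  show ?thesis
  proof (intro exI[of _ j] conjI jn)
    show "0 \<le> - (- v * cos (j * \<theta>) + u * sin (j * \<theta>))" unfolding e1 using rho sps by simp
    show "0 < v * sin (j * \<theta>) + u * cos (j * \<theta>)" unfolding e2 using rho cps by simp
    show "- (- v * cos (j * \<theta>) + u * sin (j * \<theta>)) \<le> r * (v * sin (j * \<theta>) + u * cos (j * \<theta>))"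
      unfolding e1 e2 using rho sr by (simp add: mult_left_mono algebra_simps)
  qed
qed

lemma n_bound:
  fixes r :: real
  assumes r: "0 < r" "r \<le> 1"
  shows "real (nat \<lceil>pi / (2 * arctan r)\<rceil>) \<le> 5 / r"
proof -
  define \<theta> where "\<theta> = arctan r"
  have th0: "0 < \<theta>" using r by (simp add: \<theta>_def)
  have sq: "sqrt (1 + r^2) \<le> 2"
  proof -
    have "r^2 \<le> 1" using r by (simp add: power_le_one)
    hence "1 + r^2 \<le> 2^2" by simp
    thus ?thesis by (metis real_sqrt_le_iff real_sqrt_abs abs_numeral power2_eq_square real_sqrt_mult_self)
  qed
  have pos: "0 < 1 + r^2" by (simp add: add_pos_nonneg)
  have "r / 2 \<le> r / sqrt (1 + r^2)"
    using r sq pos by (intro divide_left_mono) auto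
  also have "\<dots> = sin \<theta>" by (simp add: \<theta>_def sin_arctan)
  also have "\<dots> \<le> \<theta>" using th0 by (intro sin_x_le_x) simp
  finally have thr: "r / 2 \<le> \<theta>" .
  have "pi / (2 * \<theta>) \<le> pi / r"
  proof -
    have "r \<le> 2 * \<theta>" using thr by simp
    thus ?thesis using r th0 by (intro divide_left_mono) (auto simp: pi_ge_zero)
  qed
  moreover have "real (nat \<lceil>pi / (2 * \<theta>)\<rceil>) = of_int \<lceil>pi / (2 * \<theta>)\<rceil>"
  proof -
    have "0 \<le> pi / (2 * \<theta>)" using th0 by (simp add: pi_ge_zero)
    hence "0 \<le> \<lceil>pi / (2 * \<theta>)\<rceil>" by simp
    thus ?thesis by simp
  qed
  moreover have "of_int \<lceil>pi / (2 * \<theta>)\<rceil> \<le> pi / (2 * \<theta>) + 1" by (rule of_int_ceiling_le_add_one)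
  ultimately have "real (nat \<lceil>pi / (2 * \<theta>)\<rceil>) \<le> pi / r + 1" by linarith
  also have "\<dots> \<le> 4 / r + 1 / r"
    using r pi_less_4 by (intro add_mono divide_right_mono) (auto simp: le_divide_eq_1)
  finally show ?thesis unfolding \<theta>_def by simp
qed

context setting2 begin

lemma phi_space: "x \<in> space (euc d) \<Longrightarrow> phi 0 1 T x \<in> space (euc d)"
  using d1 by (auto simp: space_euc phi_def PiE_def extensional_def)

lemma upd_space: "x \<in> space (euc d) \<Longrightarrow> i < d \<Longrightarrow> x(i := v) \<in> space (euc d)"
  by (auto simp: space_euc PiE_def extensional_def)

lemma phi_rot_app': "phi 0 (Suc 0) (rotT \<alpha>) x 0 = x 0 * cos \<alpha> + x 1 * sin \<alpha>"
  "phi 0 (Suc 0) (rotT \<alpha>) x (Suc 0) = - x 0 * sin \<alpha> + x 1 * cos \<alpha>"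
  using phi_rot_app by simp_all

lemma conjS: "{x \<in> space M. P x} \<in> sets M \<Longrightarrow> {x \<in> space M. Q x} \<in> sets M \<Longrightarrow> {x \<in> space M. P x \<and> Q x} \<in> sets M"
proof -
  assume "{x \<in> space M. P x} \<in> sets M" "{x \<in> space M. Q x} \<in> sets M"
  moreover have "{x \<in> space M. P x \<and> Q x} = {x \<in> space M. P x} \<inter> {x \<in> space M. Q x}" by auto
  ultimately show ?thesis by simp
qed

lemma mfun: "(\<lambda>x. x 0) \<in> borel_measurable (euc d)" "(\<lambda>x. x 1) \<in> borel_measurable (euc d)"
  "(\<lambda>x. - x 0) \<in> borel_measurable (euc d)" "(\<lambda>x. r * x 1) \<in> borel_measurable (euc d)"
  "(\<lambda>x. 0::real) \<in> borel_measurable (euc d)"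
  using cm by (auto intro!: borel_measurable_uminus borel_measurable_times borel_measurable_const)

lemma sets_mk: 
  "{x \<in> space (euc d). x 0 < 0 \<and> 0 < x 1} \<in> sets (euc d)"
  "{x \<in> space (euc d). 0 < x 0 \<and> 0 < x 1} \<in> sets (euc d)"
  "{x \<in> space (euc d). 0 < x 0 \<and> x 1 < 0} \<in> sets (euc d)"
  "{x \<in> space (euc d). x 0 < 0 \<and> x 1 < 0} \<in> sets (euc d)"
  "{x \<in> space (euc d). x 0 = 0} \<in> sets (euc d)"
  "{x \<in> space (euc d). x 1 = 0} \<in> sets (euc d)"
  "{x \<in> space (euc d). x 0 \<le> 0 \<and> 0 < x 1 \<and> - x 0 \<le> r * x 1} \<in> sets (euc d)"
  by (intro conjS borel_measurable_less[OF mfun(1) mfun(5)] borel_measurable_less[OF mfun(5) mfun(2)]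
     borel_measurable_less[OF mfun(5) mfun(1)] borel_measurable_less[OF mfun(2) mfun(5)]
     borel_measurable_eq[OF mfun(1) mfun(5)] borel_measurable_eq[OF mfun(2) mfun(5)]
     borel_measurable_le[OF mfun(1) mfun(5)] borel_measurable_le[OF mfun(3) mfun(4)])+

lemma null_measure: "i < d \<Longrightarrow> measure D {x \<in> space (euc d). x i = 0} = 0"
  using null_D by (simp add: measure_def null_setsD1)

lemma PQ: "measure D {x \<in> space (euc d). x 0 < 0 \<and> 0 < x 1} \<ge> 1 / 4"
proof -
  interpret Dp: prob_space D by (rule ps)
  define Qm where "Qm = {x \<in> space (euc d). x 0 < 0 \<and> 0 < x 1}"
  define Qpp where "Qpp = {x \<in> space (euc d). 0 < x 0 \<and> 0 < x 1}"
  define Qpm where "Qpm = {x \<in> space (euc d). 0 < x 0 \<and> x 1 < 0}"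
  define Qmm where "Qmm = {x \<in> space (euc d). x 0 < 0 \<and> x 1 < 0}"
  define Z0 where "Z0 = {x \<in> space (euc d). x 0 = 0}"
  define Z1 where "Z1 = {x \<in> space (euc d). x 1 = 0}"
  have sets: "Qm \<in> sets D" "Qpp \<in> sets D" "Qpm \<in> sets D" "Qmm \<in> sets D" "Z0 \<in> sets D" "Z1 \<in> sets D"
    unfolding Qm_def Qpp_def Qpm_def Qmm_def Z0_def Z1_def by (simp_all add: sets_mk)
  have e1: "phi 0 1 (\<lambda>(a,b). (- a, b)) -` Qpp \<inter> space (euc d) = Qm"
    unfolding Qpp_def Qm_def using d0 by (auto simp: phi_neg1_app upd_space)
  have e2: "phi 0 1 (\<lambda>(a,b). (a, - b)) -` Qm \<inter> space (euc d) = Qmm"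
    unfolding Qmm_def Qm_def using d1 by (auto simp: phi_neg2_app upd_space)
  have e3: "phi 0 1 (\<lambda>(a,b). (a, - b)) -` Qpp \<inter> space (euc d) = Qpm"
    unfolding Qpp_def Qpm_def using d1 by (auto simp: phi_neg2_app upd_space)
  have m1: "measure D Qm = measure D Qpp"
    using measure_phi[OF pres2_neg1 _ _ _ nT_neg1, of 0 1 Qpp] d1 sets e1 by simp
  have m2: "measure D Qmm = measure D Qm"
    using measure_phi[OF pres2_neg2 _ _ _ nT_neg2, of 0 1 Qm] d1 sets e2 by simp
  have m3: "measure D Qpm = measure D Qpp"
    using measure_phi[OF pres2_neg2 _ _ _ nT_neg2, of 0 1 Qpp] d1 sets e3 by simp
  have z: "measure D Z0 = 0" "measure D Z1 = 0"
    unfolding Z0_def Z1_def using null_measure d1 by auto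
  have cov: "space D = ((((Qm \<union> Qpp) \<union> Qpm) \<union> Qmm) \<union> Z0) \<union> Z1"
    unfolding Qm_def Qpp_def Qpm_def Qmm_def Z0_def Z1_def by auto
  have "1 = measure D (((((Qm \<union> Qpp) \<union> Qpm) \<union> Qmm) \<union> Z0) \<union> Z1)"
    using Dp.prob_space cov by simp
  also have "\<dots> \<le> measure D ((((Qm \<union> Qpp) \<union> Qpm) \<union> Qmm) \<union> Z0) + measure D Z1"
    using sets by (intro measure_Un_le) auto
  also have "\<dots> \<le> measure D (((Qm \<union> Qpp) \<union> Qpm) \<union> Qmm) + measure D Z0 + measure D Z1"
    using sets by (intro add_mono measure_Un_le) auto
  also have "\<dots> \<le> measure D ((Qm \<union> Qpp) \<union> Qpm) + measure D Qmm + measure D Z0 + measure D Z1"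
    using sets by (intro add_mono measure_Un_le) auto
  also have "\<dots> \<le> measure D (Qm \<union> Qpp) + measure D Qpm + measure D Qmm + measure D Z0 + measure D Z1"
    using sets by (intro add_mono measure_Un_le) auto
  also have "\<dots> \<le> measure D Qm + measure D Qpp + measure D Qpm + measure D Qmm + measure D Z0 + measure D Z1"
    using sets by (intro add_mono measure_Un_le) auto
  also have "\<dots> = 4 * measure D Qm" using m1 m2 m3 z by simp
  finally show ?thesis unfolding Qm_def by simp
qed

lemma PW:
  assumes r: "0 < r" "r \<le> 1"
  shows "measure D {x \<in> space (euc d). x 0 \<le> 0 \<and> 0 < x 1 \<and> - x 0 \<le> r * x 1} \<ge> r / 20"
proof -
  interpret Dp: prob_space D by (rule ps)
  define W where "W = {x \<in> space (euc d). x 0 \<le> 0 \<and> 0 < x 1 \<and> - x 0 \<le> r * x 1}"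
  define Qm where "Qm = {x \<in> space (euc d). x 0 < 0 \<and> 0 < x 1}"
  define \<theta> where "\<theta> = arctan r"
  define n where "n = nat \<lceil>pi / (2 * \<theta>)\<rceil>"
  define B where "B j = phi 0 1 (rotT (real j * \<theta>)) -` W \<inter> space (euc d)" for j :: nat
  have Ws: "W \<in> sets (euc d)" unfolding W_def by (rule sets_mk)
  have Bs: "B j \<in> sets D" for j
    unfolding B_def using phi_meas[OF d0 d1, of "rotT (real j * \<theta>)"] pres2_rotT Ws
    by (auto simp: pres2_def intro: measurable_sets)
  have mB: "measure D (B j) = measure D W" for j
    unfolding B_def using measure_phi[OF pres2_rotT _ _ _ nT_rotT, of 0 1 W] d1 Ws by simp
  have cov: "Qm \<subseteq> (\<Union>j\<in>{..<n}. B j)"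
  proof
    fix x assume x: "x \<in> Qm"
    hence xs: "x \<in> space (euc d)" and u: "0 < x 1" and v: "0 < - x 0" by (auto simp: Qm_def)
    obtain j where j: "j < n"
      "- (- (- x 0) * cos (real j * \<theta>) + x 1 * sin (real j * \<theta>)) \<ge> 0"
      "(- x 0) * sin (real j * \<theta>) + x 1 * cos (real j * \<theta>) > 0"
      "- (- (- x 0) * cos (real j * \<theta>) + x 1 * sin (real j * \<theta>)) \<le> r * ((- x 0) * sin (real j * \<theta>) + x 1 * cos (real j * \<theta>))"
      using cover_point[OF r u v] unfolding \<theta>_def n_def by blast
    let ?y = "phi 0 1 (rotT (real j * \<theta>)) x"
    have y0: "?y 0 = - (- (- (- x 0) * cos (real j * \<theta>) + x 1 * sin (real j * \<theta>)))"
      unfolding phi_rot_app by simp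
    have y1: "?y 1 = (- x 0) * sin (real j * \<theta>) + x 1 * cos (real j * \<theta>)"
      unfolding phi_rot_app by simp
    have c1: "?y 0 \<le> 0" using j(2) unfolding y0 by linarith
    have c2: "0 < ?y 1" using j(3) unfolding y1 by linarith
    have c3: "- ?y 0 \<le> r * ?y 1" using j(4) unfolding y0 y1 by simp
    have "?y \<in> W"
      unfolding W_def using phi_space[OF xs] c1 c2 c3 by blast
    thus "x \<in> (\<Union>j\<in>{..<n}. B j)" using j(1) xs by (auto simp: B_def)
  qed
  have "1 / 4 \<le> measure D Qm" unfolding Qm_def by (rule PQ)
  also have "\<dots> \<le> measure D (\<Union>j\<in>{..<n}. B j)"
    using cov Bs by (intro Dp.finite_measure_mono) auto
  also have "\<dots> \<le> (\<Sum>j\<in>{..<n}. measure D (B j))"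
    using Bs by (intro measure_UNION_le) auto
  also have "\<dots> = real n * measure D W" using mB by simp
  also have "\<dots> \<le> (5 / r) * measure D W"
    using n_bound[OF r] by (intro mult_right_mono) (auto simp: n_def \<theta>_def)
  finally have "1 / 4 \<le> (5 / r) * measure D W" .
  hence "r / 20 \<le> measure D W" using r by (simp add: field_simps)
  thus ?thesis unfolding W_def .
qed

end

definition wst :: "nat \<Rightarrow> real" where "wst = (\<lambda>i. if i = 0 then 1 else 0)"

lemma sum_split2: fixes d :: nat shows "2 \<le> d \<Longrightarrow> (\<Sum>i<d. f i) = f 0 + f 1 + (\<Sum>i\<in>{2..<d}. f i)"
proof -
  assume d: "2 \<le> d"
  have "{..<d} = insert 0 (insert 1 {2..<d})" using d by auto
  thus ?thesis by (simp add: add.assoc)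
qed

context setting2 begin

definition ef :: "((nat \<Rightarrow> real) \<Rightarrow> real) \<Rightarrow> (nat \<Rightarrow> real) \<Rightarrow> real" where
  "ef h x = (if h x \<noteq> 1 then eta \<beta> x else 0) + (if h x \<noteq> -1 then 1 - eta \<beta> x else 0)"

lemma ef_bounds: "0 \<le> ef h x" "ef h x \<le> 1"
  using eta01[of x] by (auto simp: ef_def)

lemma ef_min: "ef h x \<ge> min (eta \<beta> x) (1 - eta \<beta> x)"
  using eta01[of x] by (auto simp: ef_def)

lemma ef_int: "h \<in> borel_measurable (euc d) \<Longrightarrow> integrable D (ef h)"
proof -
  assume hm: "h \<in> borel_measurable (euc d)"
  interpret Dp: prob_space D by (rule ps)
  have "ef h \<in> borel_measurable (euc d)" unfolding ef_def
    by (intro borel_measurable_add measurable_If eta_m borel_measurable_const borel_measurable_diff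
        borel_measurable_neq[OF hm borel_measurable_const])
  thus ?thesis using ef_bounds
    by (intro Dp.integrable_const_bound[where B=1]) (auto simp: meas_D)
qed

lemma err_ef: "h \<in> borel_measurable (euc d) \<Longrightarrow> err (noisy_dist D (eta \<beta>)) h = (\<integral>x. ef h x \<partial>D)"
  using errN[OF eta_m eta01] by (simp add: ef_def)

lemma ip_wst: "ip d wst x = x 0"
proof -
  have "ip d wst x = (\<Sum>i<d. if i = 0 then x i else 0)" unfolding ip_def wst_def
    by (intro sum.cong) auto
  also have "\<dots> = x 0" using d0 by simp
  finally show ?thesis .
qed

lemma sgn0_m: "(\<lambda>x. sgn (x 0)) \<in> borel_measurable (euc d)"
  by (rule measurable_compose[OF cm(1) borel_measurable_sgn])

lemma hstar: "hs_err d (noisy_dist D (eta \<beta>)) wst = (\<integral>x. ef (\<lambda>x. sgn (x 0)) x \<partial>D)"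
  unfolding hs_err_def ip_wst by (rule err_ef[OF sgn0_m])

lemma ef_star: "x 0 \<noteq> 0 \<Longrightarrow> ef (\<lambda>x. sgn (x 0)) x = min (eta \<beta> x) (1 - eta \<beta> x)"
  using b0 b1 by (auto simp: ef_def eta_def sfun_def sgn_if min_def)

lemma bayes:
  assumes hm: "h \<in> borel_measurable (euc d)"
  shows "hs_err d (noisy_dist D (eta \<beta>)) wst \<le> err (noisy_dist D (eta \<beta>)) h"
proof -
  have "(\<integral>x. ef (\<lambda>x. sgn (x 0)) x \<partial>D) \<le> (\<integral>x. ef h x \<partial>D)"
  proof (rule integral_mono_AE)
    show "integrable D (ef (\<lambda>x. sgn (x 0)))" by (rule ef_int[OF sgn0_m])
    show "integrable D (ef h)" by (rule ef_int[OF hm])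
    show "AE x in D. ef (\<lambda>x. sgn (x 0)) x \<le> ef h x"
      using AE_nz[OF d0] by (rule AE_mp) (intro AE_I2 impI, simp add: ef_star ef_min)
  qed
  thus ?thesis using hstar err_ef[OF hm] by simp
qed

definition Wset where "Wset = {x \<in> space (euc d). x 0 \<le> 0 \<and> 0 < x 1 \<and> - x 0 \<le> ((1 - \<beta>) / (1 + \<beta>)) * x 1}"
definition Z0 where "Z0 = {x \<in> space (euc d). x 0 = 0}"

lemma avg_vals: "average_vec d (noisy_dist D (eta \<beta>)) 0 = (1 + \<beta>) * A0"
  "average_vec d (noisy_dist D (eta \<beta>)) 1 = (1 - \<beta>) * A0"
  "\<And>i. 2 \<le> i \<Longrightarrow> i < d \<Longrightarrow> average_vec d (noisy_dist D (eta \<beta>)) i = 0"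
  using avgN[OF eta_m eta01] integ d0 d1 a0_val a1_val ai_val by auto

lemma ip_avg: "ip d (average_vec d (noisy_dist D (eta \<beta>))) x = A0 * ((1 + \<beta>) * x 0 + (1 - \<beta>) * x 1)"
proof -
  let ?a = "average_vec d (noisy_dist D (eta \<beta>))"
  have "ip d ?a x = ?a 0 * x 0 + ?a 1 * x 1 + (\<Sum>i\<in>{2..<d}. ?a i * x i)"
    unfolding ip_def by (rule sum_split2[OF d2])
  also have "(\<Sum>i\<in>{2..<d}. ?a i * x i) = 0" using avg_vals(3) by (intro sum.neutral) auto
  finally have "ip d ?a x = ?a 0 * x 0 + ?a 1 * x 1" by simp
  thus ?thesis unfolding avg_vals(1,2) by (simp add: algebra_simps)
qed

lemma pointwise:
  assumes x: "x \<in> space (euc d)"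
  shows "ef (\<lambda>x. sgn (A0 * ((1 + \<beta>) * x 0 + (1 - \<beta>) * x 1))) x \<ge>
     ef (\<lambda>x. sgn (x 0)) x + \<beta> * indicator Wset x - 2 * indicator Z0 x"
proof (cases "x 0 = 0")
  case True
  thus ?thesis using ef_bounds[of "\<lambda>x. sgn (x 0)" x] ef_bounds[of "\<lambda>x. sgn (A0 * ((1 + \<beta>) * x 0 + (1 - \<beta>) * x 1))" x] b1 x
    by (auto simp: indicator_def Z0_def)
next
  case False
  have nZ: "indicator Z0 x = (0::real)" using False by (simp add: Z0_def indicator_def)
  show ?thesis
  proof (cases "x \<in> Wset")
    case False
    thus ?thesis using nZ ef_star[of x, OF \<open>x 0 \<noteq> 0\<close>] ef_min by (simp add: indicator_def)
  next
    case True
    hence x0: "x 0 < 0" and x1: "0 < x 1" and w: "- x 0 \<le> ((1 - \<beta>) / (1 + \<beta>)) * x 1"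
      using \<open>x 0 \<noteq> 0\<close> by (auto simp: Wset_def)
    have "(1 + \<beta>) * (- x 0) \<le> (1 - \<beta>) * x 1" using w b0 by (simp add: field_simps)
    hence ge: "0 \<le> A0 * ((1 + \<beta>) * x 0 + (1 - \<beta>) * x 1)" using A0_nonneg by simp
    have eta_x: "eta \<beta> x = (1 - \<beta>) / 2"
    proof -
      have "x 0 * x 1 < 0" using x0 x1 by (rule mult_neg_pos)
      thus ?thesis using x0 by (simp add: eta_def sfun_def)
    qed
    have e1: "ef (\<lambda>x. sgn (x 0)) x = (1 - \<beta>) / 2" using x0 eta_x by (simp add: ef_def)
    have e2: "ef (\<lambda>x. sgn (A0 * ((1 + \<beta>) * x 0 + (1 - \<beta>) * x 1))) x \<ge> (1 + \<beta>) / 2"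
      using ge eta_x b1 by (auto simp: ef_def sgn_if)
    show ?thesis using e1 e2 nZ True by (simp add: indicator_def field_simps)
  qed
qed

lemma excess:
  "hs_err d (noisy_dist D (eta \<beta>)) (average_vec d (noisy_dist D (eta \<beta>)))
     - hs_err d (noisy_dist D (eta \<beta>)) wst \<ge> \<beta> * measure D Wset"
proof -
  interpret Dp: prob_space D by (rule ps)
  let ?h = "\<lambda>x. sgn (A0 * ((1 + \<beta>) * x 0 + (1 - \<beta>) * x 1))"
  have lin: "(\<lambda>x. A0 * ((1 + \<beta>) * x 0 + (1 - \<beta>) * x 1)) \<in> borel_measurable (euc d)"
    by (intro borel_measurable_times borel_measurable_add borel_measurable_const cm)
  have hm: "?h \<in> borel_measurable (euc d)" by (rule measurable_compose[OF lin borel_measurable_sgn])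
  have ha: "hs_err d (noisy_dist D (eta \<beta>)) (average_vec d (noisy_dist D (eta \<beta>))) = (\<integral>x. ef ?h x \<partial>D)"
    unfolding hs_err_def ip_avg by (rule err_ef[OF hm])
  have Ws: "Wset \<in> sets D" using sets_mk(7)[of "(1 - \<beta>) / (1 + \<beta>)"] unfolding Wset_def by simp
  have Zs: "Z0 \<in> sets D" using sets_mk(5) unfolding Z0_def by simp
  have iW: "integrable D (indicator Wset :: _ \<Rightarrow> real)" using Ws by (intro Dp.integrable_const_bound[where B=1]) (auto intro!: borel_measurable_indicator simp: indicator_def)
  have iZ: "integrable D (indicator Z0 :: _ \<Rightarrow> real)" using Zs by (intro Dp.integrable_const_bound[where B=1]) (auto intro!: borel_measurable_indicator simp: indicator_def)
  have i0: "integrable D (ef (\<lambda>x. sgn (x 0)))" by (rule ef_int[OF sgn0_m])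
  have "(\<integral>x. ef (\<lambda>x. sgn (x 0)) x + \<beta> * indicator Wset x - 2 * indicator Z0 x \<partial>D) \<le> (\<integral>x. ef ?h x \<partial>D)"
    using pointwise i0 iW iZ ef_int[OF hm] by (intro integral_mono) auto
  moreover have "(\<integral>x. ef (\<lambda>x. sgn (x 0)) x + \<beta> * indicator Wset x - 2 * indicator Z0 x \<partial>D)
      = (\<integral>x. ef (\<lambda>x. sgn (x 0)) x \<partial>D) + \<beta> * measure D Wset - 2 * measure D Z0"
    using i0 iW iZ Ws Zs by simp
  moreover have "measure D Z0 = 0" unfolding Z0_def using null_measure d0 by simp
  ultimately show ?thesis using ha hstar by simp
qed

lemma main_loc:
  "\<exists>\<eta> wstar.
        \<eta> \<in> borel_measurable (euc d) \<and> (\<forall>x. 0 \<le> \<eta> x \<and> \<eta> x \<le> 1) \<and>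
        (\<forall>x\<in>space (euc d). \<bar>\<eta> x - (1 - \<eta> x)\<bar> \<ge> \<beta>) \<and>
        (\<forall>h \<in> borel_measurable (euc d). (\<forall>x. h x \<in> {-1, 1}) \<longrightarrow>
            hs_err d (noisy_dist D \<eta>) wstar \<le> err (noisy_dist D \<eta>) h) \<and>
        hs_err d (noisy_dist D \<eta>) (average_vec d (noisy_dist D \<eta>))
          - hs_err d (noisy_dist D \<eta>) wstar \<ge> (1/20) * (\<beta> * (1 - \<beta>) / (1 + \<beta>))"
proof (intro exI[of _ "eta \<beta>"] exI[of _ wst] conjI ballI allI impI eta_m eta01[THEN conjunct1] eta01[THEN conjunct2])
  fix x
  have "eta \<beta> x - (1 - eta \<beta> x) = sg x * sfun \<beta> x" using two_eta[of x] by simp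
  moreover have "\<bar>sg x * sfun \<beta> x\<bar> \<ge> \<beta>" using b0 b1 by (auto simp: sg_def sfun_def)
  ultimately show "\<beta> \<le> \<bar>eta \<beta> x - (1 - eta \<beta> x)\<bar>" by simp
next
  fix h :: "(nat \<Rightarrow> real) \<Rightarrow> real" assume "h \<in> borel_measurable (euc d)"
  thus "hs_err d (noisy_dist D (eta \<beta>)) wst \<le> err (noisy_dist D (eta \<beta>)) h" by (rule bayes)
next
  have "(1/20) * (\<beta> * (1 - \<beta>) / (1 + \<beta>)) \<le> \<beta> * measure D Wset"
  proof (cases "\<beta> = 1")
    case True thus ?thesis by (simp add: measure_nonneg)
  next
    case False
    hence r: "0 < (1 - \<beta>) / (1 + \<beta>)" "(1 - \<beta>) / (1 + \<beta>) \<le> 1" using b0 b1 by auto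
    have "(1 - \<beta>) / (1 + \<beta>) / 20 \<le> measure D Wset" unfolding Wset_def by (rule PW[OF r])
    hence le: "\<beta> * ((1 - \<beta>) / (1 + \<beta>) / 20) \<le> \<beta> * measure D Wset"
      by (rule mult_left_mono[OF _ less_imp_le[OF b0]])
    have eq: "(1/20) * (\<beta> * (1 - \<beta>) / (1 + \<beta>)) = \<beta> * ((1 - \<beta>) / (1 + \<beta>) / 20)"
      by (simp add: field_simps)
    show ?thesis unfolding eq by (rule le)
  qed
  thus "(1/20) * (\<beta> * (1 - \<beta>) / (1 + \<beta>)) \<le> hs_err d (noisy_dist D (eta \<beta>)) (average_vec d (noisy_dist D (eta \<beta>)))
          - hs_err d (noisy_dist D (eta \<beta>)) wst" using excess by linarith
qed

end

theorem theorem5: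
  shows "\<exists>c>0. \<forall>d\<ge>2. \<forall>D \<beta>.
     radial_continuous_dist d D \<and> (\<forall>i<d. integrable D (\<lambda>x. x i)) \<and> 0 < \<beta> \<and> \<beta> \<le> 1 \<longrightarrow>
     (\<exists>\<eta> wstar.
        \<eta> \<in> borel_measurable (euc d) \<and> (\<forall>x. 0 \<le> \<eta> x \<and> \<eta> x \<le> 1) \<and>
        (\<forall>x\<in>space (euc d). \<bar>\<eta> x - (1 - \<eta> x)\<bar> \<ge> \<beta>) \<and>
        (\<forall>h \<in> borel_measurable (euc d). (\<forall>x. h x \<in> {-1, 1}) \<longrightarrow>
            hs_err d (noisy_dist D \<eta>) wstar \<le> err (noisy_dist D \<eta>) h) \<and>
        hs_err d (noisy_dist D \<eta>) (average_vec d (noisy_dist D \<eta>))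
          - hs_err d (noisy_dist D \<eta>) wstar \<ge> c * (\<beta> * (1 - \<beta>) / (1 + \<beta>)))"
proof (intro exI[of _ "1/20::real"] conjI allI impI)
  fix d :: nat and D :: "(nat \<Rightarrow> real) measure" and \<beta> :: real
  assume d: "2 \<le> d"
  assume H: "radial_continuous_dist d D \<and> (\<forall>i<d. integrable D (\<lambda>x. x i)) \<and> 0 < \<beta> \<and> \<beta> \<le> 1"
  then obtain f g where fg: "prob_space D" "f \<in> borel_measurable (euc d)"
    "\<forall>x\<in>space (euc d). f x = g (enorm d x)" "D = density (euc d) f"
    unfolding radial_continuous_dist_def by blast
  have loc: "setting2 d D f g \<beta>"
    unfolding setting2_def setting_def setting2_axioms_def using d fg H by blast
  show "\<exists>\<eta> wstar.
        \<eta> \<in> borel_measurable (euc d) \<and> (\<forall>x. 0 \<le> \<eta> x \<and> \<eta> x \<le> 1) \<and>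
        (\<forall>x\<in>space (euc d). \<bar>\<eta> x - (1 - \<eta> x)\<bar> \<ge> \<beta>) \<and>
        (\<forall>h \<in> borel_measurable (euc d). (\<forall>x. h x \<in> {-1, 1}) \<longrightarrow>
            hs_err d (noisy_dist D \<eta>) wstar \<le> err (noisy_dist D \<eta>) h) \<and>
        hs_err d (noisy_dist D \<eta>) (average_vec d (noisy_dist D \<eta>))
          - hs_err d (noisy_dist D \<eta>) wstar \<ge> (1/20) * (\<beta> * (1 - \<beta>) / (1 + \<beta>))"
    by (rule setting2.main_loc[OF loc])
qed simp

end
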